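(* Let $(X,<)$ be a linearly ordered set. For all non-principal ultrafilters $u,v$ over $X$, $$(u\,\tilde<\,v\ \vee\ u\,\tilde>\,v)\ \wedge\ \neg(u\,\tilde<\,v\ \wedge\ u\,\tilde>\,v).$$ More precisely, if $\mathrm{supp}(u)\ne\mathrm{supp}(v)$ then $$u\,\tilde<\,v\iff v\,\tilde>\,u\iff\neg(v\,\tilde<\,u)\iff\neg(u\,\tilde>\,v)\iff\mathrm{supp}(u)<\mathrm{supp}(v),$$ and if $\mathrm{supp}(u)=\mathrm{supp}(v)$ then $$u\,\tilde<\,v\iff\neg(u\,\tilde>\,v)\iff \mathrm{supp}(u)=\mathrm{supp}(v)=I_u=I_v,$$ $$u\,\tilde>\,v\iff\neg(u\,\tilde<\,v)\iff \mathrm{supp}(u)=\mathrm{supp}(v)=J_u=J_v.$$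
   Context: $\beta X$ is the set of ultrafilters over $X$; $\tilde x=\{S\subseteq X:x\in S\}$. For a binary relation $R$ on $X$, $u\,\tilde R\,v\iff\{x\in X:\{y\in X:x\,R\,y\}\in v\}\in u$; here $R$ is $<$ or $>$. $I_u=\bigcap\{I\in u: I\text{ initial segment of }X\}$, $J_u=\bigcap\{J\in u: J\text{ final segment of }X\}$; for non-principal $u$ exactly one of $I_u\in u$, $J_u\in u$ holds. Supports: $\mathrm{supp}(\tilde x)=\{x\}$; for non-principal $u$, $\mathrm{supp}(u)$ is $I_u$ regarded as a left half-cut if $I_u\in u$, and $J_u$ regarded as a right half-cut if $J_u\in u$; supports are equal iff of the same kind and equal as sets. "$\mathrm{supp}(u)=\mathrm{supp}(v)=I_u=I_v$" means $u,v$ non-principal, $I_u\in u$, $I_v\in v$, $I_u=I_v$; similarly for $J$. Order on supports: $\{x\}<\{y\}$ iff $x<y$; $\{x\}<I$ iff $x\in I$, $I<\{x\}$ iff $x\notin I$; $\{x\}<J$ iff $x\notin J$, $J<\{x\}$ iff $x\in J$; $I<I'$ iff $I\subsetneq I'$; $J<J'$ iff $J\supsetneq J'$; $I<J$ iff $I\cap J=\emptyset$, $J<I$ iff $I\cap J\ne\emptyset$. *)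

theory Defs
  imports Main
begin

definition ultrafilter :: "'a set set \<Rightarrow> bool" where
  "ultrafilter U \<longleftrightarrow> UNIV \<in> U \<and> {} \<notin> U
     \<and> (\<forall>A B. A \<in> U \<and> B \<in> U \<longrightarrow> A \<inter> B \<in> U)
     \<and> (\<forall>A B. A \<in> U \<and> A \<subseteq> B \<longrightarrow> B \<in> U)
     \<and> (\<forall>A. A \<in> U \<or> - A \<in> U)"

definition principal_uf :: "'a \<Rightarrow> 'a set set" where
  "principal_uf x = {S. x \<in> S}"

definition principal :: "'a set set \<Rightarrow> bool" where
  "principal U \<longleftrightarrow> (\<exists>x. U = principal_uf x)"

definition rel_ext :: "('a \<Rightarrow> 'a \<Rightarrow> bool) \<Rightarrow> 'a set set \<Rightarrow> 'a set set \<Rightarrow> bool" where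
  "rel_ext R u v \<longleftrightarrow> {x. {y. R x y} \<in> v} \<in> u"

abbreviation uless :: "'a::linorder set set \<Rightarrow> 'a set set \<Rightarrow> bool" where
  "uless u v \<equiv> rel_ext (<) u v"

abbreviation ugreater :: "'a::linorder set set \<Rightarrow> 'a set set \<Rightarrow> bool" where
  "ugreater u v \<equiv> rel_ext (>) u v"

definition initial_seg :: "'a::linorder set \<Rightarrow> bool" where
  "initial_seg I \<longleftrightarrow> (\<forall>x y. y \<in> I \<and> x \<le> y \<longrightarrow> x \<in> I)"

definition final_seg :: "'a::linorder set \<Rightarrow> bool" where
  "final_seg J \<longleftrightarrow> (\<forall>x y. y \<in> J \<and> y \<le> x \<longrightarrow> x \<in> J)"

definition I_of :: "'a::linorder set set \<Rightarrow> 'a set" where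
  "I_of u = \<Inter>{I \<in> u. initial_seg I}"

definition J_of :: "'a::linorder set set \<Rightarrow> 'a set" where
  "J_of u = \<Inter>{J \<in> u. final_seg J}"

text \<open>Supports: a point, a left half-cut (given by an initial segment),
  or a right half-cut (given by a final segment).\<close>
datatype 'a support = Pt 'a | LeftCut "'a set" | RightCut "'a set"

definition supp :: "'a::linorder set set \<Rightarrow> 'a support" where
  "supp u = (if principal u then Pt (THE x. u = principal_uf x)
             else if I_of u \<in> u then LeftCut (I_of u) else RightCut (J_of u))"

fun supp_less :: "'a::linorder support \<Rightarrow> 'a support \<Rightarrow> bool" where
  "supp_less (Pt x) (Pt y) \<longleftrightarrow> x < y"
| "supp_less (Pt x) (LeftCut I) \<longleftrightarrow> x \<in> I"
| "supp_less (LeftCut I) (Pt x) \<longleftrightarrow> x \<notin> I"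
| "supp_less (Pt x) (RightCut J) \<longleftrightarrow> x \<notin> J"
| "supp_less (RightCut J) (Pt x) \<longleftrightarrow> x \<in> J"
| "supp_less (LeftCut I) (LeftCut I') \<longleftrightarrow> I \<subset> I'"
| "supp_less (RightCut J) (RightCut J') \<longleftrightarrow> J \<supset> J'"
| "supp_less (LeftCut I) (RightCut J) \<longleftrightarrow> I \<inter> J = {}"
| "supp_less (RightCut J) (LeftCut I) \<longleftrightarrow> I \<inter> J \<noteq> {}"

end

theory Submission imports Defs begin

lemma uf_compl: "ultrafilter u \<Longrightarrow> A \<in> u \<Longrightarrow> - A \<notin> u"
  unfolding ultrafilter_def by (metis Int_absorb2 Compl_disjoint Int_commute subset_UNIV Int_UNIV_left)

lemma uf_either: "ultrafilter u \<Longrightarrow> A \<in> u \<or> - A \<in> u"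
  unfolding ultrafilter_def by blast

lemma uf_mono: "ultrafilter u \<Longrightarrow> A \<in> u \<Longrightarrow> A \<subseteq> B \<Longrightarrow> B \<in> u"
  unfolding ultrafilter_def by blast

lemma uf_int: "ultrafilter u \<Longrightarrow> A \<in> u \<Longrightarrow> B \<in> u \<Longrightarrow> A \<inter> B \<in> u"
  unfolding ultrafilter_def by blast

lemma uf_nonempty: "ultrafilter u \<Longrightarrow> A \<in> u \<Longrightarrow> A \<noteq> {}"
  unfolding ultrafilter_def by blast

lemma uf_single: "ultrafilter u \<Longrightarrow> \<not> principal u \<Longrightarrow> {x} \<notin> u"
proof
  assume u: "ultrafilter u" and np: "\<not> principal u" and x: "{x} \<in> u"
  have "u = principal_uf x"
  proof (rule set_eqI)
    fix S
    show "S \<in> u \<longleftrightarrow> S \<in> principal_uf x"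
    proof
      assume "S \<in> u"
      hence "S \<inter> {x} \<in> u" using uf_int[OF u _ x] by blast
      hence "S \<inter> {x} \<noteq> {}" using uf_nonempty[OF u] by blast
      thus "S \<in> principal_uf x" unfolding principal_uf_def by auto
    next
      assume "S \<in> principal_uf x"
      thus "S \<in> u" using uf_mono[OF u x] unfolding principal_uf_def by auto
    qed
  qed
  thus False using np unfolding principal_def by blast
qed

lemma I_init: "initial_seg (I_of u)"
  unfolding initial_seg_def I_of_def by blast

lemma J_final: "final_seg (J_of u)"
  unfolding final_seg_def J_of_def by blast

lemma init_chain: "initial_seg (A::'a::linorder set) \<Longrightarrow> initial_seg B \<Longrightarrow> A \<subseteq> B \<or> B \<subseteq> A"
  unfolding initial_seg_def by (meson linear subsetI)

lemma I_in: "initial_seg A \<Longrightarrow> A \<in> u \<Longrightarrow> I_of u \<subseteq> A"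
  unfolding I_of_def by blast

lemma J_in: "final_seg A \<Longrightarrow> A \<in> u \<Longrightarrow> J_of u \<subseteq> A"
  unfolding J_of_def by blast

lemma IJ_compl:
  fixes u :: "'a::linorder set set"
  assumes u: "ultrafilter u" and np: "\<not> principal u"
  shows "J_of u = - I_of u"
proof (rule set_eqI)
  fix x
  show "x \<in> J_of u \<longleftrightarrow> x \<in> - I_of u"
  proof
    assume xJ: "x \<in> J_of u"
    show "x \<in> - I_of u"
    proof
      assume xI: "x \<in> I_of u"
      have i1: "initial_seg {y. y < x}" unfolding initial_seg_def by auto
      have f1: "final_seg {y. x < y}" unfolding final_seg_def by auto
      have "{y. y < x} \<notin> u" using I_in[OF i1] xI by blast
      hence a: "{y. x \<le> y} \<in> u" using uf_either[OF u, of "{y. y < x}"]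
        by (simp add: Compl_eq not_less)
      have "{y. x < y} \<notin> u" using J_in[OF f1] xJ by blast
      hence b: "{y. y \<le> x} \<in> u" using uf_either[OF u, of "{y. x < y}"]
        by (simp add: Compl_eq not_less)
      have "{y. x \<le> y} \<inter> {y. y \<le> x} = {x}" by auto
      thus False using uf_int[OF u a b] uf_single[OF u np] by simp
    qed
  next
    assume "x \<in> - I_of u"
    then obtain I where I: "I \<in> u" "initial_seg I" "x \<notin> I" unfolding I_of_def by blast
    show "x \<in> J_of u"
    proof (rule ccontr)
      assume "x \<notin> J_of u"
      then obtain J where J: "J \<in> u" "final_seg J" "x \<notin> J" unfolding J_of_def by blast
      have "I \<inter> J = {}"
      proof (rule ccontr)
        assume "I \<inter> J \<noteq> {}"
        then obtain y where "y \<in> I" "y \<in> J" by blast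
        thus False using I J unfolding initial_seg_def final_seg_def
          by (metis linear)
      qed
      thus False using uf_int[OF u I(1) J(1)] uf_nonempty[OF u] by blast
    qed
  qed
qed

lemma less_char:
  fixes v :: "'a::linorder set set"
  assumes v: "ultrafilter v" and np: "\<not> principal v"
  shows "{x. {y. x < y} \<in> v} = I_of v"
proof (rule set_eqI)
  fix x :: 'a
  have i1: "initial_seg {y. y < x}" unfolding initial_seg_def by auto
  have i2: "initial_seg {y. y \<le> x}" unfolding initial_seg_def by auto
  have f1: "final_seg {y. x < y}" unfolding final_seg_def by auto
  show "x \<in> {x. {y. x < y} \<in> v} \<longleftrightarrow> x \<in> I_of v"
  proof
    assume "x \<in> {x. {y. x < y} \<in> v}"
    hence "J_of v \<subseteq> {y. x < y}" using J_in[OF f1] by blast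
    thus "x \<in> I_of v" using IJ_compl[OF v np] by auto
  next
    assume xI: "x \<in> I_of v"
    show "x \<in> {x. {y. x < y} \<in> v}"
    proof (rule ccontr)
      assume "x \<notin> {x. {y. x < y} \<in> v}"
      hence b: "{y. y \<le> x} \<in> v" using uf_either[OF v, of "{y. x < y}"]
        by (simp add: Compl_eq not_less)
      have "{y. y < x} \<notin> v" using I_in[OF i1] xI by blast
      hence a: "{y. x \<le> y} \<in> v" using uf_either[OF v, of "{y. y < x}"]
        by (simp add: Compl_eq not_less)
      have "{y. x \<le> y} \<inter> {y. y \<le> x} = {x}" by auto
      thus False using uf_int[OF v a b] uf_single[OF v np] by simp
    qed
  qed
qed

lemma greater_char:
  fixes v :: "'a::linorder set set"
  assumes v: "ultrafilter v" and np: "\<not> principal v"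
  shows "{x. {y. y < x} \<in> v} = J_of v"
proof (rule set_eqI)
  fix x :: 'a
  have i1: "initial_seg {y. y < x}" unfolding initial_seg_def by auto
  have f1: "final_seg {y. x < y}" unfolding final_seg_def by auto
  show "x \<in> {x. {y. y < x} \<in> v} \<longleftrightarrow> x \<in> J_of v"
  proof
    assume "x \<in> {x. {y. y < x} \<in> v}"
    hence "I_of v \<subseteq> {y. y < x}" using I_in[OF i1] by blast
    thus "x \<in> J_of v" using IJ_compl[OF v np] by auto
  next
    assume xJ: "x \<in> J_of v"
    show "x \<in> {x. {y. y < x} \<in> v}"
    proof (rule ccontr)
      assume "x \<notin> {x. {y. y < x} \<in> v}"
      hence a: "{y. x \<le> y} \<in> v" using uf_either[OF v, of "{y. y < x}"]
        by (simp add: Compl_eq not_less)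
      have "{y. x < y} \<notin> v" using J_in[OF f1] xJ by blast
      hence b: "{y. y \<le> x} \<in> v" using uf_either[OF v, of "{y. x < y}"]
        by (simp add: Compl_eq not_less)
      have "{y. x \<le> y} \<inter> {y. y \<le> x} = {x}" by auto
      thus False using uf_int[OF v a b] uf_single[OF v np] by simp
    qed
  qed
qed

lemma uless_iff: "ultrafilter v \<Longrightarrow> \<not> principal v \<Longrightarrow> uless w v \<longleftrightarrow> I_of v \<in> w"
  unfolding rel_ext_def using less_char by metis

lemma ugreater_iff: "ultrafilter v \<Longrightarrow> \<not> principal v \<Longrightarrow> ugreater w v \<longleftrightarrow> - I_of v \<in> w"
  unfolding rel_ext_def using greater_char IJ_compl by metis

lemma supp_np: "\<not> principal u \<Longrightarrow> ultrafilter u \<Longrightarrow>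
  supp u = (if I_of u \<in> u then LeftCut (I_of u) else RightCut (- I_of u))"
  unfolding supp_def by (simp add: IJ_compl)

lemma left_test: "ultrafilter u \<Longrightarrow> I_of u \<in> u \<Longrightarrow> initial_seg B \<Longrightarrow> B \<in> u \<longleftrightarrow> I_of u \<subseteq> B"
  using I_in uf_mono by metis

lemma right_test: "ultrafilter u \<Longrightarrow> \<not> principal u \<Longrightarrow> - I_of u \<in> u \<Longrightarrow> initial_seg B
   \<Longrightarrow> - B \<in> u \<longleftrightarrow> - I_of u \<subseteq> - B"
proof -
  assume u: "ultrafilter u" and np: "\<not> principal u" and h: "- I_of u \<in> u" and B: "initial_seg B"
  have f: "final_seg (- B)" using B unfolding initial_seg_def final_seg_def by auto
  show ?thesis using J_in[OF f, of u] IJ_compl[OF u np] uf_mono[OF u h] by auto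
qed

lemma uf_iff: "ultrafilter u \<Longrightarrow> - A \<in> u \<longleftrightarrow> A \<notin> u"
  using uf_either uf_compl by (metis double_complement)

theorem corollary1:
  fixes u v :: "'a::linorder set set"
  assumes "ultrafilter u" and "ultrafilter v"
    and "\<not> principal u" and "\<not> principal v"
  shows "(uless u v \<or> ugreater u v) \<and> \<not> (uless u v \<and> ugreater u v)
    \<and> (supp u \<noteq> supp v \<longrightarrow>
           (uless u v \<longleftrightarrow> ugreater v u)
         \<and> (ugreater v u \<longleftrightarrow> \<not> uless v u)
         \<and> (\<not> uless v u \<longleftrightarrow> \<not> ugreater u v)
         \<and> (\<not> ugreater u v \<longleftrightarrow> supp_less (supp u) (supp v)))
    \<and> (supp u = supp v \<longrightarrow>
           (uless u v \<longleftrightarrow> \<not> ugreater u v)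
         \<and> (\<not> ugreater u v \<longleftrightarrow> (I_of u \<in> u \<and> I_of v \<in> v \<and> I_of u = I_of v))
         \<and> (ugreater u v \<longleftrightarrow> \<not> uless u v)
         \<and> (\<not> uless u v \<longleftrightarrow> (J_of u \<in> u \<and> J_of v \<in> v \<and> J_of u = J_of v)))"
proof -
  note u = assms(1) and v = assms(2) and npu = assms(3) and npv = assms(4)
  define a where "a = I_of u"
  define b where "b = I_of v"
  have ia: "initial_seg a" and ib: "initial_seg b" unfolding a_def b_def by (rule I_init)+
  have ch: "a \<subseteq> b \<or> b \<subseteq> a" using init_chain[OF ia ib] .
  have Ju: "J_of u = - a" and Jv: "J_of v = - b" unfolding a_def b_def using IJ_compl u v npu npv by auto
  have su: "supp u = (if a \<in> u then LeftCut a else RightCut (- a))" unfolding a_def using supp_np[OF npu u] .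
  have sv: "supp v = (if b \<in> v then LeftCut b else RightCut (- b))" unfolding b_def using supp_np[OF npv v] .
  have r1: "uless u v \<longleftrightarrow> b \<in> u" unfolding b_def using uless_iff[OF v npv] .
  have r2: "ugreater u v \<longleftrightarrow> - b \<in> u" unfolding b_def using ugreater_iff[OF v npv] .
  have r3: "uless v u \<longleftrightarrow> a \<in> v" unfolding a_def using uless_iff[OF u npu] .
  have r4: "ugreater v u \<longleftrightarrow> - a \<in> v" unfolding a_def using ugreater_iff[OF u npu] .
  have c1: "- b \<in> u \<longleftrightarrow> b \<notin> u" "- a \<in> u \<longleftrightarrow> a \<notin> u"
    "- b \<in> v \<longleftrightarrow> b \<notin> v" "- a \<in> v \<longleftrightarrow> a \<notin> v" using uf_iff u v by blast+
  have t1: "a \<in> u \<Longrightarrow> b \<in> u \<longleftrightarrow> a \<subseteq> b" unfolding a_def using left_test[OF u _ ib] by blast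
  have t2: "b \<in> v \<Longrightarrow> a \<in> v \<longleftrightarrow> b \<subseteq> a" unfolding b_def using left_test[OF v _ ia] by blast
  have t3: "- a \<in> u \<Longrightarrow> - b \<in> u \<longleftrightarrow> - a \<subseteq> - b" unfolding a_def using right_test[OF u npu _ ib] by blast
  have t4: "- b \<in> v \<Longrightarrow> - a \<in> v \<longleftrightarrow> - b \<subseteq> - a" unfolding b_def using right_test[OF v npv _ ia] by blast
  show ?thesis
    unfolding r1 r2 r3 r4 Ju Jv su sv a_def[symmetric] b_def[symmetric]
    using ch c1 t1 t2 t3 t4 by (cases "a \<in> u"; cases "b \<in> v"; auto)
qed

end
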